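(* There exists a unique bilinear pairing $\langle-,-\rangle:\mathcal{H}\times\mathcal{H}\to K$ such that: (1) $\langle 1,x\rangle=\varepsilon(x)$ for all $x\in\mathcal{H}$; (2) $\langle xy,z\rangle=\langle y\otimes x,\Delta(z)\rangle$ for all $x,y,z\in\mathcal{H}$, where $\langle a\otimes b,c\otimes d\rangle=\langle a,c\rangle\langle b,d\rangle$; (3) $\langle B^+(x),y\rangle=\langle x,\gamma(y)\rangle$ for all $x,y\in\mathcal{H}$. Moreover: (4) $\langle-,-\rangle$ is symmetric and non-degenerate; (5) if $x,y$ are homogeneous of different weights then $\langle x,y\rangle=0$; (6) $\langle S(x),y\rangle=\langle x,S(y)\rangle$ for all $x,y\in\mathcal{H}$, where $S$ is the antipode of $\mathcal{H}$.
   Context: Let $K$ be a field. Planar rooted trees have their children linearly ordered left to right; a planar forest is a finite, possibly empty, sequence $t_1\cdots t_n$ of planar rooted trees ($1$ = empty forest); the weight of a forest is its number of vertices. $\mathcal{H}$ is the free associative unital $K$-algebra on planar rooted trees, with basis the planar forests and product concatenation, graded by weight. $B^+(F)$ is the tree obtained by grafting the trees of $F$ (in order) on a new common root. $\varepsilon(F)=\delta_{F,1}$. $\Delta$ is the unique linear map with $\Delta(1)=1\otimes1$, $\Delta(xy)=(x\otimes1)\Delta(y)+\Delta(x)(1\otimes y)-x\otimes y$, $\Delta(B^+(x))=B^+(x)\otimes 1+(\mathrm{Id}\otimes B^+)\Delta(x)$; with it $\mathcal{H}$ is an infinitesimal Hopf algebra, whose antipode $S$ is the inverse of $\mathrm{Id}$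 for the convolution $f\star g=m\circ(f\otimes g)\circ\Delta$. The linear map $\gamma:\mathcal{H}\to\mathcal{H}$ is defined on forests by $\gamma(t_1\cdots t_n)=\delta_{t_1,\bullet}\,t_2\cdots t_n$ (where $\bullet$ is the one-vertex tree) and $\gamma(1)=0$. *)

theory Defs
  imports "HOL-Library.Poly_Mapping"
begin

text \<open>Planar rooted trees: a root with a (left-to-right ordered) list of subtrees.
  Planar forests are lists of planar trees; the empty list is the empty forest 1.\<close>
datatype ptree = Node "ptree list"

type_synonym forest = "ptree list"

text \<open>The algebra H: finitely supported K-linear combinations of planar forests;
  H \<otimes> H: finitely supported K-linear combinations of pairs of forests.\<close>
type_synonym 'k alg = "forest \<Rightarrow>\<^sub>0 'k"
type_synonym 'k alg2 = "(forest \<times> forest) \<Rightarrow>\<^sub>0 'k"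

fun wt_t :: "ptree \<Rightarrow> nat" and wt_f :: "forest \<Rightarrow> nat" where
  "wt_t (Node F) = Suc (wt_f F)"
| "wt_f [] = 0"
| "wt_f (t # ts) = wt_t t + wt_f ts"

definition homogeneous :: "nat \<Rightarrow> ('k::zero) alg \<Rightarrow> bool" where
  "homogeneous n x \<longleftrightarrow> (\<forall>F\<in>Poly_Mapping.keys x. wt_f F = n)"

definition bas :: "forest \<Rightarrow> ('k::{zero,one}) alg" where
  "bas F = Poly_Mapping.single F 1"

definition sc :: "'k::semiring_0 \<Rightarrow> ('a \<Rightarrow>\<^sub>0 'k) \<Rightarrow> ('a \<Rightarrow>\<^sub>0 'k)" where
  "sc c x = Poly_Mapping.map (\<lambda>v. c * v) x"

definition lin_map :: "('k::field alg \<Rightarrow> 'k alg) \<Rightarrow> bool" where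
  "lin_map f \<longleftrightarrow> (\<forall>x y. f (x + y) = f x + f y) \<and> (\<forall>c x. f (sc c x) = sc c (f x))"

definition bilinear_form :: "('k::field alg \<Rightarrow> 'k alg \<Rightarrow> 'k) \<Rightarrow> bool" where
  "bilinear_form B \<longleftrightarrow>
     (\<forall>x y z. B (x + y) z = B x z + B y z) \<and> (\<forall>c x z. B (sc c x) z = c * B x z) \<and>
     (\<forall>x y z. B z (x + y) = B z x + B z y) \<and> (\<forall>c x z. B z (sc c x) = c * B z x)"

definition mult :: "'k::field alg \<Rightarrow> 'k alg \<Rightarrow> 'k alg" where
  "mult x y = (\<Sum>F\<in>Poly_Mapping.keys x. \<Sum>G\<in>Poly_Mapping.keys y. Poly_Mapping.single (F @ G) (Poly_Mapping.lookup x F * Poly_Mapping.lookup y G))"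

definition tens :: "'k::field alg \<Rightarrow> 'k alg \<Rightarrow> 'k alg2" where
  "tens x y = (\<Sum>F\<in>Poly_Mapping.keys x. \<Sum>G\<in>Poly_Mapping.keys y. Poly_Mapping.single (F, G) (Poly_Mapping.lookup x F * Poly_Mapping.lookup y G))"

definition eps :: "'k::field alg \<Rightarrow> 'k" where
  "eps x = Poly_Mapping.lookup x []"

definition Bplus :: "'k::field alg \<Rightarrow> 'k alg" where
  "Bplus x = (\<Sum>F\<in>Poly_Mapping.keys x. Poly_Mapping.single [Node F] (Poly_Mapping.lookup x F))"

fun gamma_f :: "forest \<Rightarrow> 'k::field alg" where
  "gamma_f [] = 0"
| "gamma_f (t # ts) = (if t = Node [] then bas ts else 0)"

definition gamma :: "'k::field alg \<Rightarrow> 'k alg" where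
  "gamma x = (\<Sum>F\<in>Poly_Mapping.keys x. sc (Poly_Mapping.lookup x F) (gamma_f F))"

definition lmul2 :: "forest \<Rightarrow> 'k::field alg2 \<Rightarrow> 'k alg2" where
  "lmul2 x w = (\<Sum>(a, b)\<in>Poly_Mapping.keys w. Poly_Mapping.single (x @ a, b) (Poly_Mapping.lookup w (a, b)))"

definition rmul2 :: "'k::field alg2 \<Rightarrow> forest \<Rightarrow> 'k alg2" where
  "rmul2 w y = (\<Sum>(a, b)\<in>Poly_Mapping.keys w. Poly_Mapping.single (a, b @ y) (Poly_Mapping.lookup w (a, b)))"

definition idBplus :: "'k::field alg2 \<Rightarrow> 'k alg2" where
  "idBplus w = (\<Sum>(a, b)\<in>Poly_Mapping.keys w. Poly_Mapping.single (a, [Node b]) (Poly_Mapping.lookup w (a, b)))"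

text \<open>The coproduct on basis elements, via the defining recursion:
  Delta(1) = 1 \<otimes> 1,
  Delta(t ts) = (t \<otimes> 1) Delta(ts) + Delta(t) (1 \<otimes> ts) - t \<otimes> ts,
  Delta(B^+(F)) = B^+(F) \<otimes> 1 + (Id \<otimes> B^+) Delta(F).\<close>
fun delta_t :: "ptree \<Rightarrow> 'k::field alg2" and delta_f :: "forest \<Rightarrow> 'k::field alg2" where
  "delta_t (Node F) = Poly_Mapping.single ([Node F], []) 1 + idBplus (delta_f F)"
| "delta_f [] = Poly_Mapping.single ([], []) 1"
| "delta_f (t # ts) = lmul2 [t] (delta_f ts) + rmul2 (delta_t t) ts - Poly_Mapping.single ([t], ts) 1"

definition Delta :: "'k::field alg \<Rightarrow> 'k alg2" where
  "Delta x = (\<Sum>F\<in>Poly_Mapping.keys x. sc (Poly_Mapping.lookup x F) (delta_f F))"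

definition pair2 :: "('k::field alg \<Rightarrow> 'k alg \<Rightarrow> 'k) \<Rightarrow> 'k alg2 \<Rightarrow> 'k alg2 \<Rightarrow> 'k" where
  "pair2 B u v = (\<Sum>(a, b)\<in>Poly_Mapping.keys u. \<Sum>(c, d)\<in>Poly_Mapping.keys v.
      Poly_Mapping.lookup u (a, b) * Poly_Mapping.lookup v (c, d) * B (bas a) (bas c) * B (bas b) (bas d))"

definition conv :: "('k::field alg \<Rightarrow> 'k alg) \<Rightarrow> ('k alg \<Rightarrow> 'k alg) \<Rightarrow> 'k alg \<Rightarrow> 'k alg" where
  "conv f g x = (\<Sum>(a, b)\<in>Poly_Mapping.keys (Delta x). sc (Poly_Mapping.lookup (Delta x) (a, b)) (mult (f (bas a)) (g (bas b))))"

definition unit_counit :: "'k::field alg \<Rightarrow> 'k alg" where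
  "unit_counit x = sc (eps x) (bas [])"

definition is_antipode :: "('k::field alg \<Rightarrow> 'k alg) \<Rightarrow> bool" where
  "is_antipode S \<longleftrightarrow> lin_map S \<and> conv S id = unit_counit \<and> conv id S = unit_counit"

definition pairing_axioms :: "('k::field alg \<Rightarrow> 'k alg \<Rightarrow> 'k) \<Rightarrow> bool" where
  "pairing_axioms B \<longleftrightarrow> bilinear_form B
     \<and> (\<forall>x. B (bas []) x = eps x)
     \<and> (\<forall>x y z. B (mult x y) z = pair2 B (tens y x) (Delta z))
     \<and> (\<forall>x y. B (Bplus x) y = B x (gamma y))"

end

theory Submission
  imports Defs
begin

lemma wt_f_append[simp]: "wt_f (xs @ ys) = wt_f xs + wt_f ys"
  by (induction xs) auto

lemma wt_t_pos: "wt_t t > 0" by (cases t) auto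

lemma wt_f_0_iff[simp]: "wt_f F = 0 \<longleftrightarrow> F = []"
  using wt_t_pos by (cases F) auto


fun Lc :: "nat \<Rightarrow> forest \<Rightarrow> forest" where
  "Lc k [] = []"
| "Lc k (Node F # ts) = (if k \<le> wt_f F then Lc k F else Node F # Lc (k - Suc (wt_f F)) ts)"

fun Rc :: "nat \<Rightarrow> forest \<Rightarrow> forest" where
  "Rc k [] = []"
| "Rc k (Node F # ts) = (if k \<le> wt_f F then Node (Rc k F) # ts else Rc (k - Suc (wt_f F)) ts)"

lemma wt_Lc[simp]: "wt_f (Lc k H) = min k (wt_f H)"
  by (induction k H rule: Lc.induct) auto

lemma wt_Rc[simp]: "wt_f (Rc k H) = wt_f H - k"
  by (induction k H rule: Rc.induct) auto

lemma Lc_0[simp]: "Lc 0 H = []"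
  by (induction "0::nat" H rule: Lc.induct) auto

lemma Rc_0[simp]: "Rc 0 H = H"
  by (induction "0::nat" H rule: Rc.induct) auto

lemma Lc_all: "wt_f H \<le> k \<Longrightarrow> Lc k H = H"
  by (induction k H rule: Lc.induct) auto

lemma Rc_all: "wt_f H \<le> k \<Longrightarrow> Rc k H = []"
  by (induction k H rule: Rc.induct) auto

lemma Lc_append: "Lc k (F1 @ F2) = (if k \<le> wt_f F1 then Lc k F1 else F1 @ Lc (k - wt_f F1) F2)"
proof (induction F1 arbitrary: k)
  case Nil then show ?case by simp
next
  case (Cons t F1)
  obtain F where t: "t = Node F" by (cases t)
  show ?case using Cons by (auto simp: t Lc_all)
qed

lemma Rc_append: "Rc k (F1 @ F2) = (if k \<le> wt_f F1 then Rc k F1 @ F2 else Rc (k - wt_f F1) F2)"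
proof (induction F1 arbitrary: k)
  case Nil then show ?case by simp
next
  case (Cons t F1)
  obtain F where t: "t = Node F" by (cases t)
  show ?case using Cons by (auto simp: t Rc_all)
qed

lemma Lc_Lc: "a \<le> b \<Longrightarrow> Lc a (Lc b H) = Lc a H"
  by (induction b H arbitrary: a rule: Lc.induct) auto

lemma Rc_Rc: "Rc a (Rc b H) = Rc (a + b) H"
  by (induction b H arbitrary: a rule: Rc.induct) auto

lemma Lc_Rc: "Lc a (Rc b H) = Rc b (Lc (a + b) H)"
  by (induction b H arbitrary: a rule: Rc.induct) (auto simp: Lc_all Rc_all)

fun rel :: "forest \<Rightarrow> forest \<Rightarrow> bool" where
  "rel [] H = (H = [])"
| "rel [Node F] H = (case H of [] \<Rightarrow> False | t # H' \<Rightarrow> t = Node [] \<and> rel F H')"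
| "rel (t # s # ss) H = (wt_f (s # ss) \<le> wt_f H \<and> rel (s # ss) (Lc (wt_f (s # ss)) H) \<and> rel [t] (Rc (wt_f (s # ss)) H))"

lemma rel_wt: "rel F H \<Longrightarrow> wt_f F = wt_f H"
proof (induction F H rule: rel.induct)
  case (2 F H) then show ?case by (cases H) auto
next
  case (3 t s ss H)
  define k where "k = wt_f (s # ss)"
  have a: "k \<le> wt_f H" "rel (s # ss) (Lc k H)" "rel [t] (Rc k H)" using 3(3) unfolding k_def by auto
  have "k = min k (wt_f H)" using 3(1) a unfolding k_def by auto
  moreover have "wt_t t = wt_f H - k" using 3(2) a unfolding k_def by auto
  ultimately show ?case using a(1) unfolding k_def by simp
qed auto

lemma rel_Cons: "rel (t # ts) H = (wt_f ts \<le> wt_f H \<and> rel ts (Lc (wt_f ts) H) \<and> rel [t] (Rc (wt_f ts) H))"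
  by (cases ts) auto

lemma rel_Nil2[simp]: "rel H [] \<longleftrightarrow> H = []"
proof
  assume "rel H []" from rel_wt[OF this] show "H = []" by simp
qed simp

lemma rel_Nil1: "rel [] H \<longleftrightarrow> H = []" by simp

lemma relA: "rel (F1 @ F2) H \<longleftrightarrow> (wt_f F2 \<le> wt_f H \<and> rel F2 (Lc (wt_f F2) H) \<and> rel F1 (Rc (wt_f F2) H))"
proof (induction F1 arbitrary: H)
  case Nil
  show ?case
  proof
    assume "rel ([] @ F2) H"
    then show "wt_f F2 \<le> wt_f H \<and> rel F2 (Lc (wt_f F2) H) \<and> rel [] (Rc (wt_f F2) H)"
      using rel_wt[of F2 H] by (auto simp: Lc_all Rc_all)
  next
    assume "wt_f F2 \<le> wt_f H \<and> rel F2 (Lc (wt_f F2) H) \<and> rel [] (Rc (wt_f F2) H)"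
    then have "Rc (wt_f F2) H = []" "wt_f F2 \<le> wt_f H" "rel F2 (Lc (wt_f F2) H)" by auto
    then have "wt_f H \<le> wt_f F2" by (metis wt_Rc wt_f_0_iff diff_is_0_eq)
    then show "rel ([] @ F2) H" using \<open>rel F2 (Lc (wt_f F2) H)\<close> by (simp add: Lc_all)
  qed
next
  case (Cons t F1)
  define w1 where "w1 = wt_f F1"
  define w2 where "w2 = wt_f F2"
  have "rel ((t # F1) @ F2) H = rel (t # (F1 @ F2)) H" by simp
  also have "\<dots> = (w1 + w2 \<le> wt_f H \<and> rel (F1 @ F2) (Lc (w1 + w2) H)
      \<and> rel [t] (Rc (w1 + w2) H))"
    by (simp only: rel_Cons[of t "F1 @ F2"] wt_f_append w1_def w2_def)
  also have "\<dots> = (w1 + w2 \<le> wt_f H \<and> rel F2 (Lc w2 H) \<and> rel F1 (Rc w2 (Lc (w1 + w2) H))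
      \<and> rel [t] (Rc (w1 + w2) H))"
  proof (cases "w1 + w2 \<le> wt_f H")
    case True
    have "rel (F1 @ F2) (Lc (w1 + w2) H) = (w2 \<le> wt_f (Lc (w1 + w2) H) \<and> rel F2 (Lc w2 (Lc (w1 + w2) H)) \<and> rel F1 (Rc w2 (Lc (w1 + w2) H)))"
      using Cons.IH[of "Lc (w1 + w2) H"] unfolding w2_def by simp
    also have "\<dots> = (rel F2 (Lc w2 H) \<and> rel F1 (Rc w2 (Lc (w1 + w2) H)))"
      using True by (simp add: Lc_Lc)
    finally show ?thesis using True by simp
  qed simp
  also have "\<dots> = (w2 \<le> wt_f H \<and> rel F2 (Lc w2 H) \<and> (w1 \<le> wt_f (Rc w2 H) \<and> rel F1 (Lc w1 (Rc w2 H)) \<and> rel [t] (Rc w1 (Rc w2 H))))"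
    by (simp add: Lc_Rc Rc_Rc add.commute) linarith
  also have "\<dots> = (w2 \<le> wt_f H \<and> rel F2 (Lc w2 H) \<and> rel (t # F1) (Rc w2 H))"
    by (simp only: rel_Cons[of t F1] w1_def)
  finally show ?case unfolding w2_def .
qed

lemma Lc_single_Node: "Lc k [Node F] = (if k \<le> wt_f F then Lc k F else [Node F])"
  by simp

lemma Rc_single_Node: "Rc k [Node F] = (if k \<le> wt_f F then [Node (Rc k F)] else [])"
  by simp

lemma relD3: "X = [Node F'] \<Longrightarrow> rel H X \<longleftrightarrow> (\<exists>H'. H = Node [] # H' \<and> rel H' F')"
proof (induction H X arbitrary: F' rule: rel.induct)
  case (1 H) then show ?case by simp
next
  case (2 F H) then show ?case by (cases F) auto
next
  case (3 t s ss X)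
  define k where "k = wt_f (s # ss)"
  have k1: "k \<ge> 1" unfolding k_def using wt_t_pos[of s] by simp
  have eq: "rel (t # s # ss) X = (k \<le> wt_f X \<and> rel (s # ss) (Lc k X) \<and> rel [t] (Rc k X))"
    unfolding k_def by simp
  show ?case
  proof (cases "k \<le> wt_f F'")
    case True
    have IH: "rel [t] (Rc k X) = (t = Node [] \<and> rel [] (Rc k F'))"
      using 3(2)[folded k_def, of "Rc k F'"] True 3(3) by auto
    show ?thesis
    proof
      assume "rel (t # s # ss) X"
      then have a: "rel (s # ss) (Lc k F')" "t = Node []" "Rc k F' = []"
        using eq IH True 3(3) by auto
      then have "wt_f F' \<le> k" by (metis wt_Rc wt_f_0_iff diff_is_0_eq)
      then show "\<exists>H'. t # s # ss = Node [] # H' \<and> rel H' F'" using a by (simp add: Lc_all)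
    next
      assume "\<exists>H'. t # s # ss = Node [] # H' \<and> rel H' F'"
      then have a: "t = Node []" "rel (s # ss) F'" by auto
      then have "wt_f F' = k" using rel_wt[OF a(2)] k_def by simp
      then show "rel (t # s # ss) X" using eq IH a 3(3) by (simp add: Lc_all Rc_all)
    qed
  next
    case False
    then have "Rc k X = []" using 3(3) by simp
    then have "\<not> rel (t # s # ss) X" using eq by simp
    moreover have "\<not> (\<exists>H'. t # s # ss = Node [] # H' \<and> rel H' F')"
    proof
      assume "\<exists>H'. t # s # ss = Node [] # H' \<and> rel H' F'"
      then have "rel (s # ss) F'" by auto
      from rel_wt[OF this] False k_def show False by simp
    qed
    ultimately show ?thesis by blast
  qed
qed

lemma relD2_wt:
  assumes "wt_f F2 \<le> wt_f H \<and> rel (Lc (wt_f F2) H) F2 \<and> rel (Rc (wt_f F2) H) F1"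
  shows "wt_f H = wt_f F1 + wt_f F2"
proof -
  have "wt_f (Rc (wt_f F2) H) = wt_f F1" using assms rel_wt by metis
  moreover have "wt_f F2 \<le> wt_f H" using assms by simp
  ultimately show ?thesis by simp
qed

lemma relD2: "X = F1 @ F2 \<Longrightarrow> rel H X \<longleftrightarrow> (wt_f F2 \<le> wt_f H \<and> rel (Lc (wt_f F2) H) F2 \<and> rel (Rc (wt_f F2) H) F1)"
proof (induction H X arbitrary: F1 F2 rule: rel.induct)
  case (1 X) then show ?case by auto
next
  case (2 G X)
  define w2 where "w2 = wt_f F2"
  show ?case
  proof (cases F1)
    case Nil
    show ?thesis
    proof
      assume a: "rel [Node G] X"
      then have "wt_f [Node G] = w2" using rel_wt[OF a] 2(2) Nil w2_def by simp
      then show "wt_f F2 \<le> wt_f [Node G] \<and> rel (Lc (wt_f F2) [Node G]) F2 \<and> rel (Rc (wt_f F2) [Node G]) F1"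
        using a 2(2) Nil w2_def by (simp only: Lc_all Rc_all order.refl) simp
    next
      assume a: "wt_f F2 \<le> wt_f [Node G] \<and> rel (Lc (wt_f F2) [Node G]) F2 \<and> rel (Rc (wt_f F2) [Node G]) F1"
      then have "wt_f [Node G] = w2" using relD2_wt Nil w2_def by fastforce
      then show "rel [Node G] X" using a 2(2) Nil w2_def by (simp only: Lc_all order.refl) simp
    qed
  next
    case (Cons u F1')
    have X: "X = u # (F1' @ F2)" using Cons 2(2) by simp
    have IH: "rel G (F1' @ F2) \<longleftrightarrow> (w2 \<le> wt_f G \<and> rel (Lc w2 G) F2 \<and> rel (Rc w2 G) F1')"
      using 2(1)[OF X, of F1' F2] w2_def by simp
    have L: "rel [Node G] X \<longleftrightarrow> u = Node [] \<and> rel G (F1' @ F2)" using X by simp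
    show ?thesis
    proof (cases "w2 \<le> wt_f G")
      case True
      then show ?thesis unfolding L IH using Cons w2_def by auto
    next
      case False
      then show ?thesis unfolding L IH using Cons w2_def by simp
    qed
  qed
next
  case (3 t s ss X)
  define ts where "ts = s # ss"
  define k where "k = wt_f ts"
  define w1 where "w1 = wt_f F1"
  define w2 where "w2 = wt_f F2"
  have LHS: "rel (t # s # ss) X = (k \<le> wt_f X \<and> rel ts (Lc k X) \<and> rel [t] (Rc k X))"
    unfolding k_def ts_def by simp
  have IH1: "\<And>A B. Lc k X = A @ B \<Longrightarrow> rel ts (Lc k X) \<longleftrightarrow> (wt_f B \<le> wt_f ts \<and> rel (Lc (wt_f B) ts) B \<and> rel (Rc (wt_f B) ts) A)"
    using 3(1) unfolding k_def ts_def by blast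
  have IH2: "\<And>A B. Rc k X = A @ B \<Longrightarrow> rel [t] (Rc k X) \<longleftrightarrow> (wt_f B \<le> wt_t t \<and> rel (Lc (wt_f B) [t]) B \<and> rel (Rc (wt_f B) [t]) A)"
    using 3(2) unfolding k_def ts_def by fastforce
  have H: "t # s # ss = [t] @ ts" unfolding ts_def by simp
  have wH: "wt_f (t # s # ss) = wt_t t + k" unfolding k_def ts_def by simp
  show ?case
  proof (cases "wt_t t + k = w1 + w2")
    case False
    have "\<not> rel (t # s # ss) X" using rel_wt[of "t # s # ss" X] False 3(3) wH w1_def w2_def by auto
    moreover have "\<not> (wt_f F2 \<le> wt_f (t # s # ss) \<and> rel (Lc (wt_f F2) (t # s # ss)) F2 \<and> rel (Rc (wt_f F2) (t # s # ss)) F1)"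
      using relD2_wt[of F2 "t # s # ss" F1] False wH w1_def w2_def by auto
    ultimately show ?thesis by blast
  next
    case W: True
    show ?thesis
    proof (cases "k \<le> w1")
      case True
      have lx: "Lc k X = Lc k F1" and rx: "Rc k X = Rc k F1 @ F2"
        using True 3(3) w1_def by (simp_all add: Lc_append Rc_append)
      have w2t: "w2 \<le> wt_t t" using W True by simp
      have "rel (t # s # ss) X = (rel ts (Lc k F1) \<and> rel (Lc w2 [t]) F2 \<and> rel (Rc w2 [t]) (Rc k F1))"
        unfolding LHS using IH2[OF rx] lx rx w2t W 3(3) w1_def w2_def by auto
      moreover have "Lc w2 (t # s # ss) = Lc w2 [t]" "Rc w2 (t # s # ss) = Rc w2 [t] @ ts"
        unfolding H using w2t Lc_append[of w2 "[t]" ts] Rc_append[of w2 "[t]" ts] by simp_all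
      moreover have "rel (Rc w2 [t] @ ts) F1 = (k \<le> w1 \<and> rel ts (Lc k F1) \<and> rel (Rc w2 [t]) (Rc k F1))"
        using relA[of "Rc w2 [t]" ts F1] k_def w1_def by simp
      ultimately show ?thesis using True w2t wH W w2_def by auto
    next
      case False
      define j where "j = k - w1"
      have jw2: "j \<le> w2" using W False j_def by simp
      have lx: "Lc k X = F1 @ Lc j F2" and rx: "Rc k X = Rc j F2"
        using False 3(3) w1_def j_def by (simp_all add: Lc_append Rc_append)
      have wl: "wt_f (Lc j F2) = j" using jw2 w2_def by simp
      have "rel (t # s # ss) X = (rel (Lc j ts) (Lc j F2) \<and> rel (Rc j ts) F1 \<and> rel [t] (Rc j F2))"
        unfolding LHS using IH1[OF lx] lx rx wl W False j_def 3(3) w1_def w2_def k_def by auto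
      moreover have "Lc w2 (t # s # ss) = [t] @ Lc j ts" "Rc w2 (t # s # ss) = Rc j ts"
      proof -
        have e: "w2 - wt_t t = j" using W False j_def by simp
        show "Lc w2 (t # s # ss) = [t] @ Lc j ts" "Rc w2 (t # s # ss) = Rc j ts"
          unfolding H using W False e Lc_append[of w2 "[t]" ts] Rc_append[of w2 "[t]" ts] by simp_all
      qed
      moreover have "rel ([t] @ Lc j ts) F2 = (j \<le> w2 \<and> rel (Lc j ts) (Lc j F2) \<and> rel [t] (Rc j F2))"
        using relA[of "[t]" "Lc j ts" F2] j_def k_def w2_def False by (simp add: min_def)
      ultimately show ?thesis using jw2 wH W w2_def by auto
    qed
  qed
qed

lemma rel_sym: "rel H F = rel F H"
proof (induction F H rule: rel.induct)
  case (1 H) then show ?case by simp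
next
  case (2 F H)
  show ?case
  proof
    assume "rel H [Node F]"
    then obtain H' where "H = Node [] # H'" "rel H' F" using relD3 by blast
    then show "rel [Node F] H" using 2 by simp
  next
    assume "rel [Node F] H"
    then obtain H' where "H = Node [] # H'" "rel F H'" by (cases H) auto
    then show "rel H [Node F]" using 2 relD3 by blast
  qed
next
  case (3 t s ss H)
  have "rel H (t # s # ss) = rel H ([t] @ (s # ss))" by simp
  also have "\<dots> = (wt_f (s # ss) \<le> wt_f H \<and> rel (Lc (wt_f (s # ss)) H) (s # ss) \<and> rel (Rc (wt_f (s # ss)) H) [t])"
    by (rule relD2) simp
  also have "\<dots> = rel (t # s # ss) H" using 3 by (simp only: rel.simps(3))
  finally show ?case .
qed

fun sv :: "forest \<Rightarrow> nat list" where
  "sv [] = []"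
| "sv (Node T # ts) = sv ts @ Suc (wt_f T) # sv T"

fun dv :: "forest \<Rightarrow> nat list" where
  "dv [] = []"
| "dv (Node A # B) = dv A @ Suc (wt_f B) # dv B"

fun ff :: "forest \<Rightarrow> forest" where
  "ff [] = []"
| "ff (Node T # ts) = Node (ff ts) # ff T"

lemma length_sv[simp]: "length (sv F) = wt_f F"
  by (induction F rule: sv.induct) auto

lemma length_dv[simp]: "length (dv F) = wt_f F"
  by (induction F rule: dv.induct) auto

lemma wt_ff[simp]: "wt_f (ff F) = wt_f F"
  by (induction F rule: ff.induct) auto

lemma dv_ff: "dv (ff F) = sv F"
  by (induction F rule: ff.induct) auto

lemma nth_mid: "(xs @ y # ys) ! p = (if p < length xs then xs ! p else if p = length xs then y else ys ! (p - Suc (length xs)))"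
  by (auto simp: nth_append nth_Cons')

lemma dv_bound: "p < wt_f H \<Longrightarrow> dv H ! p \<le> wt_f H - p"
proof (induction H arbitrary: p rule: dv.induct)
  case (2 A B)
  consider "p < wt_f A" | "p = wt_f A" | "p > wt_f A" by linarith
  then show ?case
  proof cases
    case 1
    then have "dv A ! p \<le> wt_f A - p" using 2(1) by simp
    then show ?thesis using 1 by (simp add: nth_mid)
  next
    case 2
    then show ?thesis by (simp add: nth_mid)
  next
    case 3
    define q where "q = p - Suc (wt_f A)"
    have q: "q < wt_f B" using 3 "2.prems" q_def by simp
    have "dv B ! q \<le> wt_f B - q" using "2.IH"(2)[OF q] .
    then show ?thesis using 3 q q_def by (simp add: nth_mid)
  qed
qed simp

lemma sv_bound: "p < wt_f F \<Longrightarrow> sv F ! p \<le> wt_f F - p"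
proof (induction F arbitrary: p rule: sv.induct)
  case (2 T ts)
  consider "p < wt_f ts" | "p = wt_f ts" | "p > wt_f ts" by linarith
  then show ?case
  proof cases
    case 1
    then have "sv ts ! p \<le> wt_f ts - p" using 2(1) by simp
    then show ?thesis using 1 by (simp add: nth_mid)
  next
    case 2
    then show ?thesis by (simp add: nth_mid)
  next
    case 3
    define q where "q = p - Suc (wt_f ts)"
    have q: "q < wt_f T" using 3 "2.prems" q_def by simp
    have "sv T ! q \<le> wt_f T - q" using "2.IH"(2)[OF q] .
    then show ?thesis using 3 q q_def by (simp add: nth_mid)
  qed
qed simp


lemma dv_Rc: "dv (Rc k H) = drop k (dv H)"
proof (induction k H rule: Rc.induct)
  case (2 k F ts)
  show ?case
  proof (cases "k \<le> wt_f F")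
    case True then show ?thesis using 2 by simp
  next
    case False
    then have "drop k (dv F @ Suc (wt_f ts) # dv ts) = drop (k - Suc (wt_f F)) (dv ts)"
      by (simp add: drop_append) (metis Suc_diff_Suc drop_Suc_Cons not_le)
    then show ?thesis using 2 False by simp
  qed
qed simp

lemma dv_Lc: "p < min k (wt_f H) \<Longrightarrow> dv (Lc k H) ! p = min (dv H ! p) (k - p)"
proof (induction k H arbitrary: p rule: Lc.induct)
  case (2 k F ts)
  show ?case
  proof (cases "k \<le> wt_f F")
    case True
    then have "p < wt_f F" using 2(3) by simp
    then show ?thesis using 2 True by (simp add: nth_mid)
  next
    case False
    define j where "j = k - Suc (wt_f F)"
    have Lc: "Lc k (Node F # ts) = Node F # Lc j ts" using False j_def by simp
    consider "p < wt_f F" | "p = wt_f F" | "p > wt_f F" by linarith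
    then show ?thesis
    proof cases
      case 1
      have "dv F ! p \<le> wt_f F - p" using dv_bound 1 by simp
      then show ?thesis using 1 False Lc by (simp add: nth_mid)
    next
      case 2
      then show ?thesis using False Lc j_def by (simp add: nth_mid)
    next
      case 3
      define q where "q = p - Suc (wt_f F)"
      have pk: "p < k" "p < Suc (wt_f F + wt_f ts)" using "2.prems" by auto
      have "q < j" "q < wt_f ts" unfolding q_def j_def using pk 3 by linarith+
      then have q: "q < min j (wt_f ts)" by simp
      have "dv (Lc j ts) ! q = min (dv ts ! q) (j - q)" using "2.IH"(2)[OF False, folded j_def, OF q] .
      moreover have "j - q = k - p" using 3 q_def j_def False by simp
      ultimately show ?thesis using 3 q_def Lc by (simp add: nth_mid)
    qed
  qed
qed simp

lemma dv_head: "H \<noteq> [] \<Longrightarrow> dv H ! 0 = wt_f H \<longleftrightarrow> (\<exists>H'. H = Node [] # H')"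
proof -
  assume "H \<noteq> []"
  then obtain A B where H: "H = Node A # B" by (metis list.exhaust ptree.exhaust)
  show ?thesis
  proof (cases "A = []")
    case True then show ?thesis using H by simp
  next
    case False
    then have "wt_f A > 0" using wt_f_0_iff by (metis gr0I)
    then have "dv A ! 0 \<le> wt_f A" using dv_bound[of 0 A] by simp
    then show ?thesis using H False \<open>wt_f A > 0\<close> by (simp add: nth_append)
  qed
qed

definition vle :: "nat list \<Rightarrow> nat list \<Rightarrow> bool" where
  "vle u v \<longleftrightarrow> length u = length v \<and> (\<forall>p<length u. u ! p \<le> v ! p)"

lemma vle_append: "vle (a @ b) v \<longleftrightarrow> length a \<le> length v \<and> vle a (take (length a) v) \<and> vle b (drop (length a) v)"
proof
  assume h: "vle (a @ b) v"
  then have l: "length a + length b = length v" unfolding vle_def by simp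
  have p: "\<And>p. p < length a + length b \<Longrightarrow> (a @ b) ! p \<le> v ! p" using h unfolding vle_def by simp
  have "vle a (take (length a) v)" unfolding vle_def
  proof (intro conjI allI impI)
    fix p assume "p < length a"
    then show "a ! p \<le> take (length a) v ! p" using p[of p] by (simp add: nth_append)
  qed (use l in simp)
  moreover have "vle b (drop (length a) v)" unfolding vle_def
  proof (intro conjI allI impI)
    fix p assume "p < length b"
    then show "b ! p \<le> drop (length a) v ! p" using p[of "length a + p"] l by (simp add: nth_append)
  qed (use l in simp)
  ultimately show "length a \<le> length v \<and> vle a (take (length a) v) \<and> vle b (drop (length a) v)" using l by simp
next
  assume h: "length a \<le> length v \<and> vle a (take (length a) v) \<and> vle b (drop (length a) v)"
  then have l: "length a + length b = length v" unfolding vle_def by simp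
  show "vle (a @ b) v" unfolding vle_def
  proof (intro conjI allI impI)
    fix p assume p: "p < length (a @ b)"
    show "(a @ b) ! p \<le> v ! p"
    proof (cases "p < length a")
      case True
      then show ?thesis using h unfolding vle_def by (auto simp: nth_append)
    next
      case False
      then have "p - length a < length b" using p by simp
      then have "b ! (p - length a) \<le> drop (length a) v ! (p - length a)" using h unfolding vle_def by blast
      then show ?thesis using False l by (simp add: nth_append)
    qed
  qed (use l in simp)
qed

lemma vle_Cons: "vle (x # a) (y # b) \<longleftrightarrow> x \<le> y \<and> vle a b"
proof
  assume h: "vle (x # a) (y # b)"
  then have "x \<le> y" unfolding vle_def by (metis length_Cons nth_Cons_0 zero_less_Suc)
  moreover have "vle a b" unfolding vle_def
  proof (intro conjI allI impI)
    fix p assume "p < length a" then show "a ! p \<le> b ! p" using h unfolding vle_def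
      by (metis Suc_less_eq length_Cons nth_Cons_Suc)
  qed (use h in \<open>simp add: vle_def\<close>)
  ultimately show "x \<le> y \<and> vle a b" by simp
next
  assume "x \<le> y \<and> vle a b"
  then show "vle (x # a) (y # b)" unfolding vle_def by (auto simp: nth_Cons')
qed

lemma sv_single: "sv [t] = sv [] @ sv [t]" by simp

lemma sv_Cons: "sv (t # ts) = sv ts @ sv [t]"
  by (cases t) simp

lemma rel_char: "rel F H \<longleftrightarrow> vle (sv F) (dv H)"
proof (induction F H rule: rel.induct)
  case (1 H) then show ?case by (auto simp: vle_def)
next
  case (2 T H)
  show ?case
  proof
    assume "rel [Node T] H"
    then obtain H' where H: "H = Node [] # H'" "rel T H'" by (cases H) auto
    then have "wt_f T = wt_f H'" using rel_wt by simp
    then show "vle (sv [Node T]) (dv H)" using H 2 by (simp add: vle_Cons)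
  next
    assume a: "vle (sv [Node T]) (dv H)"
    then have l: "wt_f H = Suc (wt_f T)" unfolding vle_def by simp
    then have "H \<noteq> []" by auto
    have ln: "length (sv [Node T]) = Suc (wt_f T)" by simp
    have "sv [Node T] ! 0 \<le> dv H ! 0" using a ln unfolding vle_def by (metis zero_less_Suc)
    then have "Suc (wt_f T) \<le> dv H ! 0" by simp
    moreover have "dv H ! 0 \<le> wt_f H" using dv_bound[of 0 H] l by simp
    ultimately obtain H' where H: "H = Node [] # H'" using dv_head[OF \<open>H \<noteq> []\<close>] l by auto
    then have "vle (sv T) (dv H')" using a by (simp add: vle_Cons)
    then show "rel [Node T] H" using 2 H by simp
  qed
next
  case (3 t s ss H)
  define ts where "ts = s # ss"
  define k where "k = wt_f ts"
  have "rel (t # s # ss) H = (k \<le> wt_f H \<and> vle (sv ts) (dv (Lc k H)) \<and> vle (sv [t]) (dv (Rc k H)))"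
    using 3 unfolding ts_def k_def by simp
  also have "\<dots> = (k \<le> wt_f H \<and> vle (sv ts) (take k (dv H)) \<and> vle (sv [t]) (drop k (dv H)))"
  proof (cases "k \<le> wt_f H")
    case True
    have "vle (sv ts) (dv (Lc k H)) = vle (sv ts) (take k (dv H))"
      unfolding vle_def using True dv_Lc[of _ k H] sv_bound[of _ ts] k_def by auto
    then show ?thesis by (simp add: dv_Rc)
  qed simp
  also have "\<dots> = vle (sv (t # s # ss)) (dv H)"
    using vle_append[of "sv ts" "sv [t]" "dv H"] sv_Cons[of t ts] k_def ts_def by simp
  finally show ?case .
qed

lemma sv_inj: "sv F = sv G \<Longrightarrow> F = G"
proof (induction F arbitrary: G rule: sv.induct)
  case 1 then show ?case by (metis length_sv list.size(3) wt_f_0_iff)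
next
  case (2 T ts G)
  have "G \<noteq> []" using 2(3) by (metis length_sv list.size(3) wt_f_0_iff neq_Nil_conv sv.simps(2) append_is_Nil_conv)
  then obtain T' ts' where G: "G = Node T' # ts'" by (metis list.exhaust ptree.exhaust)
  have e: "sv ts @ Suc (wt_f T) # sv T = sv ts' @ Suc (wt_f T') # sv T'" using 2(3) G by simp
  have n: "wt_f ts + Suc (wt_f T) = wt_f ts' + Suc (wt_f T')"
    using arg_cong[OF e, of length] by simp
  have ne: "\<not> wt_f ts < wt_f ts'" if e: "sv ts @ Suc (wt_f T) # sv T = sv ts' @ Suc (wt_f T') # sv T'"
    and n: "wt_f ts + Suc (wt_f T) = wt_f ts' + Suc (wt_f T')" for ts ts' T T'
  proof
    assume lt: "wt_f ts < wt_f ts'"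
    have "(sv ts @ Suc (wt_f T) # sv T) ! wt_f ts = Suc (wt_f T)" by (simp add: nth_mid)
    moreover have "(sv ts' @ Suc (wt_f T') # sv T') ! wt_f ts = sv ts' ! wt_f ts" using lt by (simp add: nth_mid)
    moreover have "sv ts' ! wt_f ts \<le> wt_f ts' - wt_f ts" using sv_bound[OF lt] .
    ultimately show False using e n lt by simp
  qed
  have "wt_f ts = wt_f ts'" using ne[OF e n] ne[OF e[symmetric] n[symmetric]] by simp
  then have "sv ts = sv ts'" "sv T = sv T'" using e by auto
  then show ?case using 2(1,2) G by simp
qed

lemma rel_ff: "rel F' (ff F) \<longleftrightarrow> vle (sv F') (sv F)"
  by (simp add: rel_char dv_ff)

lemma vle_sum_eq:
  assumes "vle u v" "sum_list v \<le> sum_list u"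
  shows "u = v"
proof -
  have l: "length u = length v" and le: "\<And>p. p < length u \<Longrightarrow> u ! p \<le> v ! p" using assms(1) unfolding vle_def by auto
  have su: "sum_list u = (\<Sum>p<length u. u ! p)" by (simp add: sum_list_sum_nth atLeast0LessThan)
  have sv': "sum_list v = (\<Sum>p<length u. v ! p)" using l by (simp add: sum_list_sum_nth atLeast0LessThan)
  show ?thesis
  proof (rule nth_equalityI[OF l])
    fix p assume p: "p < length u"
    show "u ! p = v ! p"
    proof (rule ccontr)
      assume "u ! p \<noteq> v ! p"
      then have "u ! p < v ! p" using le[OF p] by simp
      then have "(\<Sum>p<length u. u ! p) < (\<Sum>p<length u. v ! p)"
        using p le by (intro sum_strict_mono_ex1) auto
      then show False using assms(2) su sv' by simp
    qed
  qed
qed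


section \<open>Linear functionals and pushforwards on finitely supported maps\<close>

definition lin :: "('a \<Rightarrow> 'k::comm_ring_1) \<Rightarrow> ('a \<Rightarrow>\<^sub>0 'k) \<Rightarrow> 'k" where
  "lin \<phi> x = (\<Sum>F\<in>Poly_Mapping.keys x. Poly_Mapping.lookup x F * \<phi> F)"

lemma lin_superset:
  assumes "finite S" "Poly_Mapping.keys x \<subseteq> S"
  shows "lin \<phi> x = (\<Sum>F\<in>S. Poly_Mapping.lookup x F * \<phi> F)"
  unfolding lin_def
  by (rule sum.mono_neutral_left) (auto simp: assms in_keys_iff)

lemma lin_add: "lin \<phi> (x + y) = lin \<phi> x + lin \<phi> y"
proof -
  let ?S = "Poly_Mapping.keys x \<union> Poly_Mapping.keys y"
  have "lin \<phi> (x + y) = (\<Sum>F\<in>?S. Poly_Mapping.lookup (x + y) F * \<phi> F)"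
    by (rule lin_superset) (auto simp: keys_add)
  also have "\<dots> = (\<Sum>F\<in>?S. Poly_Mapping.lookup x F * \<phi> F) + (\<Sum>F\<in>?S. Poly_Mapping.lookup y F * \<phi> F)"
    by (simp add: lookup_add distrib_right sum.distrib)
  also have "\<dots> = lin \<phi> x + lin \<phi> y"
    by (subst (1 2) lin_superset[of ?S]) auto
  finally show ?thesis .
qed

lemma lin_zero[simp]: "lin \<phi> 0 = 0"
  by (simp add: lin_def)

lemma lin_single[simp]: "lin \<phi> (Poly_Mapping.single k c) = c * \<phi> k"
  by (subst lin_superset[of "{k}"]) auto

lemma lin_sum: "lin \<phi> (sum f I) = (\<Sum>i\<in>I. lin \<phi> (f i))"
  by (induction I rule: infinite_finite_induct) (auto simp: lin_add)

lemma lin_minus: "lin \<phi> (x - y) = lin \<phi> x - lin \<phi> y"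
  using lin_add[of \<phi> "x - y" y] by (simp add: algebra_simps)

lemma lookup_sc[simp]: "Poly_Mapping.lookup (sc c x) k = c * Poly_Mapping.lookup x k"
  unfolding sc_def by (simp add: map.rep_eq when_def)

lemma keys_sc: "Poly_Mapping.keys (sc c x) \<subseteq> Poly_Mapping.keys x"
  by (auto simp: in_keys_iff)

lemma lin_sc: "lin \<phi> (sc c x) = c * lin \<phi> x"
proof -
  have "lin \<phi> (sc c x) = (\<Sum>F\<in>Poly_Mapping.keys x. Poly_Mapping.lookup (sc c x) F * \<phi> F)"
    by (rule lin_superset) (auto simp: keys_sc)
  then show ?thesis by (simp add: lin_def sum_distrib_left mult.assoc)
qed

lemma lin_cong: "(\<And>F. F \<in> Poly_Mapping.keys x \<Longrightarrow> \<phi> F = \<psi> F) \<Longrightarrow> lin \<phi> x = lin \<psi> x"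
  unfolding lin_def by (rule sum.cong) auto

lemma lin_fun_add: "lin (\<lambda>F. \<phi> F + \<psi> F) x = lin \<phi> x + lin \<psi> x"
  unfolding lin_def by (simp add: distrib_left sum.distrib)

lemma lin_fun_mult: "lin (\<lambda>F. c * \<phi> F) x = c * lin \<phi> x"
  unfolding lin_def by (subst sum_distrib_left) (rule sum.cong, auto simp: mult_ac)

lemma lin_fun_mult_right: "lin (\<lambda>F. \<phi> F * c) x = lin \<phi> x * c"
  using lin_fun_mult[of c \<phi> x] by (simp add: mult.commute)

lemma lin_fun_sum: "lin (\<lambda>F. \<Sum>i\<in>I. \<phi> i F) x = (\<Sum>i\<in>I. lin (\<phi> i) x)"
  unfolding lin_def by (simp add: sum_distrib_left sum.swap[of _ I])

lemma lin_fun_zero[simp]: "lin (\<lambda>F. 0) x = 0"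
  unfolding lin_def by simp

lemma lin_swap: "lin (\<lambda>F. lin (\<lambda>G. \<phi> F G) y) x = lin (\<lambda>G. lin (\<lambda>F. \<phi> F G) x) y"
  unfolding lin_def by (simp add: sum_distrib_left sum.swap[of _ "Poly_Mapping.keys x"] algebra_simps)

lemma lin_prod: "lin (\<lambda>F. lin (\<lambda>G. \<phi> F * \<psi> G) y) x = lin \<phi> x * lin \<psi> y"
  unfolding lin_def sum_product by (rule sum.cong[OF refl]) (simp add: sum_distrib_left mult_ac)

lemma lin_indicator: "lin (\<lambda>G. if G = a then 1 else 0) x = Poly_Mapping.lookup x a"
  by (subst lin_superset[of "insert a (Poly_Mapping.keys x)"]) (auto simp: if_distrib cong: if_cong)

lemma lin_bas[simp]: "lin \<phi> (bas F) = \<phi> F"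
  by (simp add: bas_def)

lemma pm_expand: "x = (\<Sum>F\<in>Poly_Mapping.keys x. Poly_Mapping.single F (Poly_Mapping.lookup x F))"
  by (rule poly_mapping_eqI) (auto simp: lookup_sum lookup_single when_def in_keys_iff)

lemma lin_ext: "(\<And>\<phi>. lin \<phi> x = lin \<phi> y) \<Longrightarrow> x = y"
proof (rule poly_mapping_eqI)
  fix k assume "\<And>\<phi>. lin \<phi> x = lin \<phi> y"
  from this[of "\<lambda>G. if G = k then 1 else 0"] show "Poly_Mapping.lookup x k = Poly_Mapping.lookup y k"
    by (simp add: lin_indicator)
qed

definition push :: "('a \<Rightarrow> 'b) \<Rightarrow> ('a \<Rightarrow>\<^sub>0 'k::comm_ring_1) \<Rightarrow> ('b \<Rightarrow>\<^sub>0 'k)" where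
  "push h w = (\<Sum>p\<in>Poly_Mapping.keys w. Poly_Mapping.single (h p) (Poly_Mapping.lookup w p))"

lemma lin_push: "lin \<phi> (push h w) = lin (\<lambda>p. \<phi> (h p)) w"
  unfolding push_def lin_sum lin_single by (simp add: lin_def)

lemma push_add: "push h (x + y) = push h x + push h y"
  by (rule lin_ext) (simp add: lin_push lin_add)

lemma push_single[simp]: "push h (Poly_Mapping.single k c) = Poly_Mapping.single (h k) c"
  by (rule lin_ext) (simp add: lin_push)

lemma push_sum: "push h (sum f I) = (\<Sum>i\<in>I. push h (f i))"
  by (rule lin_ext) (simp add: lin_push lin_sum)

lemma lmul2_push: "lmul2 x w = push (\<lambda>(a, b). (x @ a, b)) w"
  unfolding lmul2_def push_def by (simp add: case_prod_beta)

lemma rmul2_push: "rmul2 w y = push (\<lambda>(a, b). (a, b @ y)) w"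
  unfolding rmul2_def push_def by (simp add: case_prod_beta)

lemma idBplus_push: "idBplus w = push (\<lambda>(a, b). (a, [Node b])) w"
  unfolding idBplus_def push_def by (simp add: case_prod_beta)

lemma lin_mult: "lin \<phi> (mult x y) = lin (\<lambda>F. lin (\<lambda>G. \<phi> (F @ G)) y) x"
  unfolding mult_def lin_sum lin_single lin_def[of _ x] lin_def[of _ y]
  by (rule sum.cong[OF refl]) (simp add: sum_distrib_left mult_ac)

lemma lin_tens: "lin \<phi> (tens x y) = lin (\<lambda>F. lin (\<lambda>G. \<phi> (F, G)) y) x"
  unfolding tens_def lin_sum lin_single lin_def[of _ x] lin_def[of _ y]
  by (rule sum.cong[OF refl]) (simp add: sum_distrib_left mult_ac)

lemma lin_Delta: "lin \<phi> (Delta z) = lin (\<lambda>H. lin \<phi> (delta_f H)) z"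
  unfolding Delta_def lin_sum lin_sc lin_def[of _ z] ..

lemma lin_Bplus: "lin \<phi> (Bplus x) = lin (\<lambda>F. \<phi> [Node F]) x"
  unfolding Bplus_def lin_sum lin_single lin_def[of _ x] ..

lemma lin_gamma_f: "lin \<phi> (gamma_f G) = (case G of [] \<Rightarrow> 0 | t # ts \<Rightarrow> if t = Node [] then \<phi> ts else 0)"
  by (cases G) auto

lemma lin_gamma: "lin \<phi> (gamma y) = lin (\<lambda>G. lin \<phi> (gamma_f G)) y"
  unfolding gamma_def lin_sum lin_sc lin_def[of _ y] ..

lemma eps_lin: "eps x = lin (\<lambda>G. if G = [] then 1 else 0) x"
  by (simp add: eps_def lin_indicator)

lemma pair2_lin: "pair2 B u v = lin (\<lambda>p. lin (\<lambda>q. B (bas (fst p)) (bas (fst q)) * B (bas (snd p)) (bas (snd q))) v) u"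
  unfolding pair2_def lin_def
  by (simp add: case_prod_beta sum_distrib_left mult_ac)

section \<open>The coproduct on basis elements\<close>

lemma sum_atMost_add: "(\<Sum>k\<le>a + b. g k) = (\<Sum>k\<le>a. g k) + (\<Sum>j<b. g (a + Suc j))"
  by (induction b) (auto simp: add.assoc)

lemma sum_atMost_shift0: "(\<Sum>j\<le>b. g j) = g 0 + (\<Sum>j<b. g (Suc j))"
  by (induction b) (auto simp: add.assoc)

lemma delta_formula:
  "delta_t t = (\<Sum>k\<le>wt_t t. Poly_Mapping.single (Lc k [t], Rc k [t]) (1::'k::field))"
  "delta_f F = (\<Sum>k\<le>wt_f F. Poly_Mapping.single (Lc k F, Rc k F) (1::'k::field))"
proof (induction t and F rule: delta_t_delta_f.induct)
  case (1 F)
  have "idBplus (delta_f F :: 'k alg2) = (\<Sum>k\<le>wt_f F. Poly_Mapping.single (Lc k F, [Node (Rc k F)]) 1)"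
    unfolding 1 idBplus_push push_sum by simp
  also have "\<dots> = (\<Sum>k\<le>wt_f F. Poly_Mapping.single (Lc k [Node F], Rc k [Node F]) 1)"
    by (rule sum.cong) auto
  finally show ?case by (simp add: Lc_all Rc_all)
next
  case 2 then show ?case by simp
next
  case (3 t ts)
  define a where "a = wt_t t"
  define b where "b = wt_f ts"
  have tt: "t # ts = [t] @ ts" by simp
  have A: "rmul2 (delta_t t :: 'k alg2) ts = (\<Sum>k\<le>a. Poly_Mapping.single (Lc k (t # ts), Rc k (t # ts)) 1)"
    unfolding 3(2) rmul2_push push_sum a_def
    by (rule sum.cong[OF refl]) (simp add: Lc_append[of _ "[t]" ts, folded tt] Rc_append[of _ "[t]" ts, folded tt])
  have B: "lmul2 [t] (delta_f ts :: 'k alg2) = Poly_Mapping.single ([t], ts) 1 +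
      (\<Sum>j<b. Poly_Mapping.single (Lc (a + Suc j) (t # ts), Rc (a + Suc j) (t # ts)) 1)"
    unfolding 3(1) lmul2_push push_sum b_def sum_atMost_shift0
    by (simp add: push_add push_sum Lc_append[of _ "[t]" ts, folded tt] Rc_append[of _ "[t]" ts, folded tt] a_def)
  have "delta_f (t # ts) = lmul2 [t] (delta_f ts) + rmul2 (delta_t t) ts - Poly_Mapping.single ([t], ts) (1::'k)"
    by simp
  also have "\<dots> = (\<Sum>k\<le>a + b. Poly_Mapping.single (Lc k (t # ts), Rc k (t # ts)) 1)"
    unfolding A B sum_atMost_add by simp
  finally show ?case by (simp add: a_def b_def)
qed

section \<open>The pairing\<close>

lemma sum_eq_single:
  assumes "finite A" "a \<in> A" "\<And>x. x \<in> A \<Longrightarrow> x \<noteq> a \<Longrightarrow> g x = 0"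
  shows "sum g A = g a"
proof -
  have "sum g A = sum g {a}"
    by (rule sum.mono_neutral_right) (use assms in auto)
  then show ?thesis by simp
qed

definition ind :: "bool \<Rightarrow> 'k::comm_ring_1" where "ind b = (if b then 1 else 0)"

definition Bp :: "'k::field alg \<Rightarrow> 'k alg \<Rightarrow> 'k" where
  "Bp x y = lin (\<lambda>F. lin (\<lambda>G. ind (rel F G)) y) x"

lemma Bp_bas: "Bp (bas F) (bas G) = ind (rel F G)"
  by (simp add: Bp_def)

lemma Bp_bas2: "Bp x (bas G) = lin (\<lambda>F. ind (rel F G)) x"
  by (simp add: Bp_def)

lemma Bp_bas1: "Bp (bas F) y = lin (\<lambda>G. ind (rel F G)) y"
  by (simp add: Bp_def)

lemma lin_delta_f: "lin \<psi> (delta_f H :: 'k::field alg2) = (\<Sum>k\<le>wt_f H. \<psi> (Lc k H, Rc k H))"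
  unfolding delta_formula lin_sum by simp

lemma ind_mult: "ind a * ind b = (ind (a \<and> b) :: 'k::comm_ring_1)"
  by (simp add: ind_def)

lemma ind_relA: "(ind (rel (F @ G) H) :: 'k::comm_ring_1) = (\<Sum>k\<le>wt_f H. ind (rel G (Lc k H)) * ind (rel F (Rc k H)))"
proof (cases "wt_f G \<le> wt_f H")
  case True
  have "(\<Sum>k\<le>wt_f H. ind (rel G (Lc k H)) * ind (rel F (Rc k H)) :: 'k) =
      ind (rel G (Lc (wt_f G) H)) * ind (rel F (Rc (wt_f G) H))"
  proof (rule sum_eq_single)
    fix k assume k: "k \<in> {..wt_f H}" "k \<noteq> wt_f G"
    have "\<not> rel G (Lc k H)"
    proof
      assume "rel G (Lc k H)"
      then have "wt_f G = min k (wt_f H)" using rel_wt by fastforce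
      then show False using k by auto
    qed
    then show "(ind (rel G (Lc k H)) * ind (rel F (Rc k H)) :: 'k) = 0" by (simp add: ind_def)
  qed (use True in auto)
  then show ?thesis using True relA[of F G H] by (simp add: ind_mult)
next
  case False
  have "\<not> rel G (Lc k H)" for k
  proof
    assume "rel G (Lc k H)"
    then have "wt_f G = min k (wt_f H)" using rel_wt by fastforce
    then show False using False by auto
  qed
  then show ?thesis using False relA[of F G H] by (simp add: ind_def)
qed

lemma Bp_bilinear: "bilinear_form (Bp :: 'k::field alg \<Rightarrow> 'k alg \<Rightarrow> 'k)"
  unfolding bilinear_form_def Bp_def
  by (simp add: lin_add lin_sc lin_fun_add lin_fun_mult)

lemma Bp_ax1: "Bp (bas []) x = eps x"
  unfolding Bp_bas1 eps_lin by (rule lin_cong) (simp add: ind_def)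

lemma Bp_ax2: "Bp (mult x y) z = pair2 Bp (tens y x) (Delta z)"
proof -
  have "Bp (mult x y) z = lin (\<lambda>F. lin (\<lambda>G. lin (\<lambda>H. ind (rel (F @ G) H)) z) y) x"
    unfolding Bp_def lin_mult ..
  also have "\<dots> = lin (\<lambda>F. lin (\<lambda>G. lin (\<lambda>H. \<Sum>k\<le>wt_f H. ind (rel G (Lc k H)) * ind (rel F (Rc k H))) z) y) x"
    by (simp only: ind_relA)
  also have "\<dots> = lin (\<lambda>G. lin (\<lambda>F. lin (\<lambda>H. \<Sum>k\<le>wt_f H. ind (rel G (Lc k H)) * ind (rel F (Rc k H))) z) x) y"
    by (rule lin_swap)
  also have "\<dots> = pair2 Bp (tens y x) (Delta z)"
    unfolding pair2_lin lin_tens lin_Delta lin_delta_f by (simp add: Bp_bas)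
  finally show ?thesis .
qed

lemma Bp_ax3: "Bp (Bplus x) y = Bp x (gamma y)"
proof -
  have "Bp (Bplus x) y = lin (\<lambda>F. lin (\<lambda>G. ind (rel [Node F] G)) y) x"
    unfolding Bp_def lin_Bplus ..
  also have "\<dots> = Bp x (gamma y)"
    unfolding Bp_def lin_gamma
    by (rule lin_cong, rule lin_cong) (auto simp: lin_gamma_f ind_def split: list.splits)
  finally show ?thesis .
qed

lemma Bp_axioms: "pairing_axioms (Bp :: 'k::field alg \<Rightarrow> 'k alg \<Rightarrow> 'k)"
  unfolding pairing_axioms_def using Bp_bilinear Bp_ax1 Bp_ax2 Bp_ax3 by blast

section \<open>Uniqueness\<close>

lemma sc_bas: "sc (c::'k::field) (bas F) = Poly_Mapping.single F c"
  by (rule lin_ext) (simp add: lin_sc)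

lemma bil_zero1: "bilinear_form B \<Longrightarrow> B 0 y = 0"
  unfolding bilinear_form_def by (metis add_0 add_cancel_right_right)

lemma bil_zero2: "bilinear_form B \<Longrightarrow> B y 0 = 0"
  unfolding bilinear_form_def by (metis add_0 add_cancel_right_right)

lemma bil_sum1: "bilinear_form B \<Longrightarrow> B (sum f I) y = (\<Sum>i\<in>I. B (f i) y)"
  by (induction I rule: infinite_finite_induct) (auto simp: bil_zero1, simp add: bilinear_form_def)

lemma bil_sum2: "bilinear_form B \<Longrightarrow> B y (sum f I) = (\<Sum>i\<in>I. B y (f i))"
  by (induction I rule: infinite_finite_induct) (auto simp: bil_zero2, simp add: bilinear_form_def)

lemma bil_expand1: "bilinear_form B \<Longrightarrow> B x y = lin (\<lambda>F. B (bas F) y) x"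
proof -
  assume b: "bilinear_form B"
  have "B x y = B (\<Sum>F\<in>Poly_Mapping.keys x. sc (Poly_Mapping.lookup x F) (bas F)) y"
    by (subst pm_expand) (simp add: sc_bas)
  also have "\<dots> = lin (\<lambda>F. B (bas F) y) x"
    using b unfolding bil_sum1[OF b] lin_def bilinear_form_def by simp
  finally show ?thesis .
qed

lemma bil_expand2: "bilinear_form B \<Longrightarrow> B y x = lin (\<lambda>F. B y (bas F)) x"
proof -
  assume b: "bilinear_form B"
  have "B y x = B y (\<Sum>F\<in>Poly_Mapping.keys x. sc (Poly_Mapping.lookup x F) (bas F))"
    by (subst pm_expand) (simp add: sc_bas)
  also have "\<dots> = lin (\<lambda>F. B y (bas F)) x"
    using b unfolding bil_sum2[OF b] lin_def bilinear_form_def by simp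
  finally show ?thesis .
qed

lemma bil_expand: "bilinear_form B \<Longrightarrow> B x y = lin (\<lambda>F. lin (\<lambda>G. B (bas F) (bas G)) y) x"
  by (subst bil_expand1, assumption, rule lin_cong, rule bil_expand2)

lemma bas_Node: "bas [Node T] = Bplus (bas T)"
  by (rule lin_ext) (simp add: lin_Bplus)

lemma gamma_bas: "gamma (bas G) = gamma_f G"
  by (rule lin_ext) (simp add: lin_gamma)

lemma bas_Cons: "bas (t # ts) = mult (bas [t]) (bas ts)"
  by (rule lin_ext) (simp add: lin_mult)

lemma tens_bas: "tens (bas a) (bas b) = Poly_Mapping.single (a, b) 1"
  by (rule lin_ext) (simp add: lin_tens)

lemma Delta_bas: "Delta (bas H) = delta_f H"
  by (rule lin_ext) (simp add: lin_Delta)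

lemma unique_bas:
  assumes P: "pairing_axioms B"
  shows "B (bas F) (bas G) = ind (rel F G)"
proof (induction "wt_f F" arbitrary: F G rule: less_induct)
  case less
  have bil: "bilinear_form B" and a1: "\<And>x. B (bas []) x = eps x"
    and a2: "\<And>x y z. B (mult x y) z = pair2 B (tens y x) (Delta z)"
    and a3: "\<And>x y. B (Bplus x) y = B x (gamma y)"
    using P unfolding pairing_axioms_def by auto
  consider "F = []" | T where "F = [Node T]" | t s ss where "F = t # s # ss"
    by (metis list.exhaust ptree.exhaust)
  then show ?case
  proof cases
    case 1
    then show ?thesis using a1 by (simp add: eps_def bas_def lookup_single when_def ind_def)
  next
    case (2 T)
    have "B (bas F) (bas G) = B (bas T) (gamma_f G)"
      using a3 2 by (simp add: bas_Node gamma_bas)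
    also have "\<dots> = ind (rel F G)"
    proof (cases G)
      case Nil then show ?thesis using 2 bil_zero2[OF bil] by (simp add: ind_def)
    next
      case (Cons u us)
      show ?thesis
      proof (cases "u = Node []")
        case True
        then show ?thesis using less[of T] 2 Cons by simp
      next
        case False
        then show ?thesis using 2 Cons bil_zero2[OF bil] by (simp add: ind_def)
      qed
    qed
    finally show ?thesis .
  next
    case (3 t s ss)
    have w1: "wt_f [t] < wt_f F" and w2: "wt_f (s # ss) < wt_f F"
      using 3 wt_t_pos[of s] wt_t_pos[of t] by auto
    have "B (bas F) (bas G) = pair2 B (tens (bas (s # ss)) (bas [t])) (Delta (bas G))"
      unfolding 3 bas_Cons[of t "s # ss"] by (rule a2)
    also have "\<dots> = (\<Sum>k\<le>wt_f G. B (bas (s # ss)) (bas (Lc k G)) * B (bas [t]) (bas (Rc k G)))"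
      unfolding pair2_lin tens_bas Delta_bas lin_delta_f by simp
    also have "\<dots> = (\<Sum>k\<le>wt_f G. ind (rel (s # ss) (Lc k G)) * ind (rel [t] (Rc k G)))"
      using less[OF w1] less[OF w2] by simp
    also have "\<dots> = ind (rel ([t] @ (s # ss)) G)"
      by (rule ind_relA[symmetric])
    finally show ?thesis using 3 by simp
  qed
qed

lemma unique: "pairing_axioms B \<Longrightarrow> B = Bp"
proof (intro ext)
  fix x y assume P: "pairing_axioms B"
  then have bil: "bilinear_form B" unfolding pairing_axioms_def by simp
  show "B x y = Bp x y"
    unfolding bil_expand[OF bil, of x y] unique_bas[OF P] Bp_def ..
qed

section \<open>Symmetry, non-degeneracy, homogeneity\<close>

lemma Bp_sym: "Bp x y = Bp y x"
  unfolding Bp_def by (subst lin_swap) (simp add: rel_sym)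

lemma keys_empty_zero: "Poly_Mapping.keys x = {} \<Longrightarrow> x = 0"
  by (rule poly_mapping_eqI) (auto simp: in_keys_iff)

lemma Bp_nondeg: "(\<And>y. Bp x y = 0) \<Longrightarrow> x = 0"
proof (rule ccontr)
  assume h: "\<And>y. Bp x y = 0" and nz: "x \<noteq> 0"
  define \<mu> where "\<mu> F = sum_list (sv F)" for F
  have ne: "Poly_Mapping.keys x \<noteq> {}" using nz keys_empty_zero by blast
  define m where "m = Min (\<mu> ` Poly_Mapping.keys x)"
  have "m \<in> \<mu> ` Poly_Mapping.keys x" unfolding m_def using ne by (intro Min_in) auto
  then obtain F where F: "F \<in> Poly_Mapping.keys x" "\<mu> F = m" by auto
  have mn: "\<And>F'. F' \<in> Poly_Mapping.keys x \<Longrightarrow> \<mu> F \<le> \<mu> F'" unfolding F(2) m_def by (intro Min_le) auto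
  have "Bp x (bas (ff F)) = (\<Sum>F'\<in>Poly_Mapping.keys x. Poly_Mapping.lookup x F' * ind (rel F' (ff F)))"
    by (simp add: Bp_bas2 lin_def)
  also have "\<dots> = Poly_Mapping.lookup x F * ind (rel F (ff F))"
  proof (rule sum_eq_single)
    fix F' assume F': "F' \<in> Poly_Mapping.keys x" "F' \<noteq> F"
    have "\<not> rel F' (ff F)"
    proof
      assume "rel F' (ff F)"
      then have "vle (sv F') (sv F)" by (simp add: rel_ff)
      moreover have "sum_list (sv F) \<le> sum_list (sv F')" using mn[OF F'(1)] unfolding \<mu>_def .
      ultimately have "sv F' = sv F" by (rule vle_sum_eq)
      then show False using sv_inj F'(2) by blast
    qed
    then show "Poly_Mapping.lookup x F' * ind (rel F' (ff F)) = 0" by (simp add: ind_def)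
  qed (use F in auto)
  also have "\<dots> = Poly_Mapping.lookup x F" by (simp add: rel_ff vle_def ind_def)
  finally have "Poly_Mapping.lookup x F = 0" using h by simp
  then show False using F(1) by (simp add: in_keys_iff)
qed

lemma Bp_homog:
  assumes "homogeneous n x" "homogeneous m y" "n \<noteq> m"
  shows "Bp x y = 0"
proof -
  have "Bp x y = lin (\<lambda>F. lin (\<lambda>G. 0) y) x"
    unfolding Bp_def
  proof (rule lin_cong, rule lin_cong)
    fix F G assume "F \<in> Poly_Mapping.keys x" "G \<in> Poly_Mapping.keys y"
    then have "wt_f F \<noteq> wt_f G" using assms unfolding homogeneous_def by auto
    then show "ind (rel F G) = 0" using rel_wt by (auto simp: ind_def)
  qed
  then show ?thesis by simp
qed

section \<open>A convolution on forms and the antipode\<close>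

definition dm :: "(forest \<Rightarrow> forest \<Rightarrow> 'k::comm_ring_1) \<Rightarrow> (forest \<Rightarrow> forest \<Rightarrow> 'k) \<Rightarrow> forest \<Rightarrow> forest \<Rightarrow> 'k" where
  "dm f g F G = (\<Sum>i\<le>wt_f F. \<Sum>j\<le>wt_f G. f (Lc i F) (Rc j G) * g (Rc i F) (Lc j G))"

definition Eu :: "forest \<Rightarrow> forest \<Rightarrow> 'k::comm_ring_1" where
  "Eu F G = ind (F = [] \<and> G = [])"

lemma Rc_Nil_iff: "Rc i F = [] \<longleftrightarrow> wt_f F \<le> i"
  using wt_f_0_iff[of "Rc i F"] by simp

lemma Lc_Nil_iff: "Lc i F = [] \<longleftrightarrow> i = 0 \<or> F = []"
  using wt_f_0_iff[of "Lc i F"] wt_f_0_iff[of F] by (auto simp: min_def split: if_splits)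

lemma dm_unit_right: "dm f Eu F G = f F G"
proof -
  have "dm f Eu F G = (\<Sum>j\<le>wt_f G. f (Lc (wt_f F) F) (Rc j G) * Eu (Rc (wt_f F) F) (Lc j G))"
    unfolding dm_def
  proof (rule sum_eq_single)
    fix i assume "i \<in> {..wt_f F}" "i \<noteq> wt_f F"
    then have "Rc i F \<noteq> []" by (simp add: Rc_Nil_iff)
    then show "(\<Sum>j\<le>wt_f G. f (Lc i F) (Rc j G) * Eu (Rc i F) (Lc j G)) = 0" by (simp add: Eu_def ind_def)
  qed auto
  also have "\<dots> = f (Lc (wt_f F) F) (Rc 0 G) * Eu (Rc (wt_f F) F) (Lc 0 G)"
  proof (rule sum_eq_single)
    fix j assume "j \<in> {..wt_f G}" "j \<noteq> 0"
    then have "Lc j G = [] \<Longrightarrow> G = []" by (simp add: Lc_Nil_iff)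
    then show "f (Lc (wt_f F) F) (Rc j G) * Eu (Rc (wt_f F) F) (Lc j G) = 0"
      using \<open>j \<in> {..wt_f G}\<close> \<open>j \<noteq> 0\<close> by (auto simp: Eu_def ind_def)
  qed auto
  finally show ?thesis by (simp add: Lc_all Rc_all Eu_def ind_def)
qed

lemma dm_unit_left: "dm Eu f F G = f F G"
proof -
  have "dm Eu f F G = (\<Sum>j\<le>wt_f G. Eu (Lc 0 F) (Rc j G) * f (Rc 0 F) (Lc j G))"
    unfolding dm_def
  proof (rule sum_eq_single)
    fix i assume i: "i \<in> {..wt_f F}" "i \<noteq> 0"
    then have "Lc i F \<noteq> []" by (auto simp: Lc_Nil_iff)
    then show "(\<Sum>j\<le>wt_f G. Eu (Lc i F) (Rc j G) * f (Rc i F) (Lc j G)) = 0"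
      by (simp add: Eu_def ind_def)
  qed auto
  also have "\<dots> = Eu (Lc 0 F) (Rc (wt_f G) G) * f (Rc 0 F) (Lc (wt_f G) G)"
  proof (rule sum_eq_single)
    fix j assume "j \<in> {..wt_f G}" "j \<noteq> wt_f G"
    then have "Rc j G \<noteq> []" by (simp add: Rc_Nil_iff)
    then show "Eu (Lc 0 F) (Rc j G) * f (Rc 0 F) (Lc j G) = 0" by (simp add: Eu_def ind_def)
  qed auto
  finally show ?thesis by (simp add: Lc_all Rc_all Eu_def ind_def)
qed

lemma tri: "(\<Sum>a\<le>n. \<Sum>i\<le>a. g i (a - i)) = (\<Sum>i\<le>(n::nat). \<Sum>j\<le>n - i. (g i j :: 'k::comm_monoid_add))"
proof -
  have "(\<Sum>a\<le>n. \<Sum>i\<le>a. g i (a - i)) = (\<Sum>(i, j)\<in>{(i, j). i + j \<le> n}. g i j)"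
    by (rule sum.triangle_reindex_eq[symmetric])
  also have "{(i, j). i + j \<le> n} = Sigma {..n} (\<lambda>i. {..n - i})" by auto
  also have "(\<Sum>(i, j)\<in>Sigma {..n} (\<lambda>i. {..n - i}). g i j) = (\<Sum>i\<le>n. \<Sum>j\<le>n - i. g i j)"
    by (rule sum.Sigma[symmetric]) auto
  finally show ?thesis .
qed

lemma tri2: "(\<Sum>b\<le>m. \<Sum>c\<le>m - b. g b (b + c)) = (\<Sum>j\<le>(m::nat). \<Sum>b\<le>j. (g b j :: 'k::comm_monoid_add))"
proof -
  have "(\<Sum>b\<le>m. \<Sum>c\<le>m - b. g b (b + c)) = (\<Sum>a\<le>m. \<Sum>i\<le>a. g i (i + (a - i)))"
    using tri[of "\<lambda>b c. g b (b + c)" m] by simp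
  also have "\<dots> = (\<Sum>a\<le>m. \<Sum>i\<le>a. g i a)"
    by (rule sum.cong[OF refl], rule sum.cong[OF refl]) auto
  finally show ?thesis .
qed

lemma dm_assoc: "dm (dm f g) h F G = dm f (dm g h) F G"
proof -
  define n where "n = wt_f F"
  define m where "m = wt_f G"
  define \<Phi> where "\<Phi> i i' j' j = f (Lc i F) (Rc j G) * g (Lc i' (Rc i F)) (Rc j' (Lc j G)) * h (Rc (i + i') F) (Lc j' G)" for i i' j' j
  have "dm (dm f g) h F G = (\<Sum>a\<le>n. \<Sum>b\<le>m. \<Sum>i\<le>a. \<Sum>c\<le>m - b. \<Phi> i (a - i) b (b + c))"
    unfolding dm_def n_def[symmetric] m_def[symmetric]
  proof (rule sum.cong[OF refl], rule sum.cong[OF refl])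
    fix a b assume a: "a \<in> {..n}" and b: "b \<in> {..m}"
    have wa: "wt_f (Lc a F) = a" using a n_def by simp
    have wb: "wt_f (Rc b G) = m - b" using m_def by simp
    show "(\<Sum>i\<le>wt_f (Lc a F). \<Sum>j\<le>wt_f (Rc b G). f (Lc i (Lc a F)) (Rc j (Rc b G)) * g (Rc i (Lc a F)) (Lc j (Rc b G))) * h (Rc a F) (Lc b G)
        = (\<Sum>i\<le>a. \<Sum>c\<le>m - b. \<Phi> i (a - i) b (b + c))"
      unfolding wa wb sum_distrib_right
    proof (rule sum.cong[OF refl], rule sum.cong[OF refl])
      fix i c assume i: "i \<in> {..a}"
      have "Lc i (Lc a F) = Lc i F" using i by (simp add: Lc_Lc)
      moreover have "Rc i (Lc a F) = Lc (a - i) (Rc i F)" using i Lc_Rc[of "a - i" i F] by simp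
      moreover have "Rc c (Rc b G) = Rc (b + c) G" by (simp add: Rc_Rc add.commute)
      moreover have "Lc c (Rc b G) = Rc b (Lc (b + c) G)" by (simp add: Lc_Rc add.commute)
      moreover have "i + (a - i) = a" using i by simp
      ultimately show "f (Lc i (Lc a F)) (Rc c (Rc b G)) * g (Rc i (Lc a F)) (Lc c (Rc b G)) * h (Rc a F) (Lc b G) = \<Phi> i (a - i) b (b + c)"
        unfolding \<Phi>_def by simp
    qed
  qed
  also have "\<dots> = (\<Sum>a\<le>n. \<Sum>i\<le>a. \<Sum>b\<le>m. \<Sum>c\<le>m - b. \<Phi> i (a - i) b (b + c))"
    by (rule sum.cong[OF refl], rule sum.swap)
  also have "\<dots> = (\<Sum>a\<le>n. \<Sum>i\<le>a. \<Sum>j\<le>m. \<Sum>j'\<le>j. \<Phi> i (a - i) j' j)"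
    by (simp only: tri2)
  also have "\<dots> = (\<Sum>i\<le>n. \<Sum>i'\<le>n - i. \<Sum>j\<le>m. \<Sum>j'\<le>j. \<Phi> i i' j' j)"
    by (rule tri)
  also have "\<dots> = (\<Sum>i\<le>n. \<Sum>j\<le>m. \<Sum>i'\<le>n - i. \<Sum>j'\<le>j. \<Phi> i i' j' j)"
    by (rule sum.cong[OF refl], rule sum.swap)
  also have "\<dots> = dm f (dm g h) F G"
    unfolding dm_def n_def[symmetric] m_def[symmetric]
  proof (rule sum.cong[OF refl], rule sum.cong[OF refl])
    fix i j assume i: "i \<in> {..n}" and j: "j \<in> {..m}"
    have wi: "wt_f (Rc i F) = n - i" using n_def by simp
    have wj: "wt_f (Lc j G) = j" using j m_def by simp
    show "(\<Sum>i'\<le>n - i. \<Sum>j'\<le>j. \<Phi> i i' j' j) = f (Lc i F) (Rc j G) *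
        (\<Sum>i'\<le>wt_f (Rc i F). \<Sum>j'\<le>wt_f (Lc j G). g (Lc i' (Rc i F)) (Rc j' (Lc j G)) * h (Rc i' (Rc i F)) (Lc j' (Lc j G)))"
      unfolding wi wj sum_distrib_left
    proof (rule sum.cong[OF refl], rule sum.cong[OF refl])
      fix i' j' assume j': "j' \<in> {..j}"
      have "Rc i' (Rc i F) = Rc (i + i') F" by (simp add: Rc_Rc add.commute)
      moreover have "Lc j' (Lc j G) = Lc j' G" using j' by (simp add: Lc_Lc)
      ultimately show "\<Phi> i i' j' j = f (Lc i F) (Rc j G) * (g (Lc i' (Rc i F)) (Rc j' (Lc j G)) * h (Rc i' (Rc i F)) (Lc j' (Lc j G)))"
        unfolding \<Phi>_def by (simp add: mult.assoc)
    qed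
  qed
  finally show ?thesis .
qed

lemma lookup_bas: "Poly_Mapping.lookup (bas F) G = (if F = G then 1 else 0)"
  by (simp add: bas_def lookup_single when_def)

lemma Bp_sc1: "Bp (sc c x) y = c * Bp x y"
  using Bp_bilinear unfolding bilinear_form_def by blast

lemma Bp_conv_bas: "Bp (conv f g (bas F)) y = (\<Sum>i\<le>wt_f F. Bp (mult (f (bas (Lc i F))) (g (bas (Rc i F)))) y)"
proof -
  have "Bp (conv f g (bas F)) y = lin (\<lambda>p. Bp (mult (f (bas (fst p))) (g (bas (snd p)))) y) (Delta (bas F))"
    unfolding conv_def bil_sum1[OF Bp_bilinear] lin_def
    by (rule sum.cong[OF refl]) (simp add: case_prod_beta Bp_sc1)
  then show ?thesis by (simp add: Delta_bas lin_delta_f)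
qed

lemma Bp_mult_bas: "Bp (mult u v) (bas G) = (\<Sum>j\<le>wt_f G. Bp v (bas (Lc j G)) * Bp u (bas (Rc j G)))"
proof -
  have "Bp (mult u v) (bas G) = lin (\<lambda>F1. lin (\<lambda>F2. \<Sum>j\<le>wt_f G. ind (rel F2 (Lc j G)) * ind (rel F1 (Rc j G))) v) u"
    unfolding Bp_bas2 lin_mult by (simp only: ind_relA)
  also have "\<dots> = (\<Sum>j\<le>wt_f G. lin (\<lambda>F1. lin (\<lambda>F2. ind (rel F2 (Lc j G))) v * ind (rel F1 (Rc j G))) u)"
    by (simp only: lin_fun_sum lin_fun_mult_right)
  also have "\<dots> = (\<Sum>j\<le>wt_f G. Bp v (bas (Lc j G)) * Bp u (bas (Rc j G)))"
    by (simp only: lin_fun_mult Bp_bas2)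
  finally show ?thesis .
qed

lemma antipode_bas:
  assumes "is_antipode S"
  shows "Bp (S (bas F)) (bas G) = Bp (bas F) (S (bas G))"
proof -
  define Q where "Q F G = Bp (S (bas F)) (bas G)" for F G
  define R where "R F G = Bp (bas F) (S (bas G))" for F G
  define P where "P F G = (ind (rel F G) :: 'a)" for F G
  have conv: "conv S id = unit_counit" using assms unfolding is_antipode_def by simp
  have QP: "dm Q P F G = Eu F G" for F G
  proof -
    have "dm Q P F G = Bp (conv S id (bas F)) (bas G)"
      unfolding Bp_conv_bas Bp_mult_bas dm_def
      by (rule sum.cong[OF refl], rule sum.cong[OF refl]) (simp add: Q_def P_def Bp_bas mult.commute)
    also have "\<dots> = Bp (unit_counit (bas F)) (bas G)" by (simp add: conv)
    also have "\<dots> = Eu F G"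
      by (simp add: unit_counit_def Bp_sc1 Bp_bas eps_def lookup_bas Eu_def ind_def)
    finally show ?thesis .
  qed
  have PR: "dm P R F G = Eu F G" for F G
  proof -
    have "dm P R F G = dm Q P G F"
      unfolding dm_def
      by (subst sum.swap) (simp add: Q_def R_def P_def Bp_sym[of "S _"] rel_sym mult.commute)
    also have "\<dots> = Eu F G" using QP by (simp add: Eu_def conj_commute)
    finally show ?thesis .
  qed
  have PR': "dm P R = Eu" using PR by (intro ext)
  have QP': "dm Q P = Eu" using QP by (intro ext)
  have "Q F G = dm Q Eu F G" by (simp add: dm_unit_right)
  also have "\<dots> = dm Q (dm P R) F G" by (simp only: PR')
  also have "\<dots> = dm (dm Q P) R F G" by (simp add: dm_assoc)
  also have "\<dots> = dm Eu R F G" by (simp only: QP')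
  also have "\<dots> = R F G" by (simp add: dm_unit_left)
  finally show ?thesis unfolding Q_def R_def .
qed

lemma antipode_sym:
  assumes "is_antipode S"
  shows "Bp (S x) y = Bp x (S y)"
proof -
  have lm: "lin_map S" using assms unfolding is_antipode_def by simp
  have Sa: "\<And>x y. S (x + y) = S x + S y" and Ss: "\<And>c x. S (sc c x) = sc c (S x)"
    using lm unfolding lin_map_def by auto
  have Ba: "\<And>x y z. Bp (x + y) z = Bp x z + Bp y z" "\<And>x y z. Bp z (x + y) = Bp z x + Bp z y"
    and Bs: "\<And>c x z. Bp (sc c x) z = c * Bp x z" "\<And>c x z. Bp z (sc c x) = c * Bp z x"
    using Bp_bilinear unfolding bilinear_form_def by blast+
  have b1: "bilinear_form (\<lambda>x y. Bp (S x) y)"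
    unfolding bilinear_form_def by (simp add: Sa Ss Ba Bs)
  have b2: "bilinear_form (\<lambda>x y. Bp x (S y))"
    unfolding bilinear_form_def by (simp add: Sa Ss Ba Bs)
  have "Bp (S x) y = lin (\<lambda>F. lin (\<lambda>G. Bp (S (bas F)) (bas G)) y) x"
    using bil_expand[OF b1, of x y] by simp
  also have "\<dots> = lin (\<lambda>F. lin (\<lambda>G. Bp (bas F) (S (bas G))) y) x"
    using antipode_bas[OF assms] by simp
  also have "\<dots> = Bp x (S y)"
    using bil_expand[OF b2, of x y] by simp
  finally show ?thesis .
qed

theorem theorem19:
  shows "(\<exists>!B :: 'k::field alg \<Rightarrow> 'k alg \<Rightarrow> 'k. pairing_axioms B)
    \<and> (\<forall>B :: 'k alg \<Rightarrow> 'k alg \<Rightarrow> 'k. pairing_axioms B \<longrightarrow>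
         (\<forall>x y. B x y = B y x)
       \<and> (\<forall>x. (\<forall>y. B x y = 0) \<longrightarrow> x = 0)
       \<and> (\<forall>y. (\<forall>x. B x y = 0) \<longrightarrow> y = 0)
       \<and> (\<forall>n m x y. homogeneous n x \<and> homogeneous m y \<and> n \<noteq> m \<longrightarrow> B x y = 0)
       \<and> (\<forall>S. is_antipode S \<longrightarrow> (\<forall>x y. B (S x) y = B x (S y))))"
proof (intro conjI allI impI)
  show "\<exists>!B :: 'k::field alg \<Rightarrow> 'k alg \<Rightarrow> 'k. pairing_axioms B"
    using Bp_axioms unique by blast
next
  fix B :: "'k alg \<Rightarrow> 'k alg \<Rightarrow> 'k" assume P: "pairing_axioms B"
  then have B: "B = Bp" by (rule unique)
  show "\<And>x y. B x y = B y x" unfolding B by (rule Bp_sym)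
  show "\<And>x. \<forall>y. B x y = 0 \<Longrightarrow> x = 0" unfolding B using Bp_nondeg by blast
  show "\<And>y. \<forall>x. B x y = 0 \<Longrightarrow> y = 0" unfolding B using Bp_nondeg Bp_sym by metis
  show "\<And>n m x y. homogeneous n x \<and> homogeneous m y \<and> n \<noteq> m \<Longrightarrow> B x y = 0"
    unfolding B using Bp_homog by blast
  show "\<And>S x y. is_antipode S \<Longrightarrow> B (S x) y = B x (S y)"
    unfolding B using antipode_sym by blast
qed

end
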